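(* Under any CLC choice model, the pseudo-competitive property holds: for every seller $i\in\mathcal N$ and all price vectors $\mathbf p,\mathbf p'\in[0,\bar v]^N$ such that (1) $\{j\in\mathcal N: p_j\ge p_i\}=\{j\in\mathcal N: p'_j\ge p_i\}$ and (2) $p_j=p'_j$ for every $j$ in this set, we have $R_i(\mathbf p)=R_i(\mathbf p')$. (In particular $p_i=p'_i$, and the revenue of $i$ is unchanged when any seller pricing strictly below $p_i$ changes its price to another value strictly below $p_i$.)
   Context: CLC setup. There are $N$ sellers $\mathcal N=\{1,\dots,N\}$, each selling one item, and a unit mass of customers, each buying at most one item. Items have a price attribute (indexed $0$) and $K$ non-price attributes indexed by $\mathcal A=\{1,\dots,K\}$; $\bar{\mathcal A}=\{0\}\cup\mathcal A$. Non-price attribute $k$ takes values in an arbitrary set $\mathcal V^k$; prices lie in $\mathcal V=[0,\bar v]$ for a fixed $\bar v>0$. Seller $i$'s item has fixed non-price attribute values $v_i^k\in\mathcal V^k$ and price $p_i\in\mathcal V$ chosen by seller $i$; $\mathbf p=(p_1,\dots,p_N)$, and $v_i^0:=p_i$. Each customer $c$ has: a strict total order $\succ_c$ on $\bar{\mathcal A}$ (attribute importance); for each attribute $k$ a complete transitive weak preference $\succsim_c^k$ on its value set, with strict part $\succ_c^k$ and indifference $\sim_c^k$ (and $v\sim_c^k v$), where for price $p\succ_c^0p'$ iff $p<p'$ and $p\sim_c^0p'$ iff $p=p'$; a willingness-to-pay $w_c\in[0,\bar v]$; a set $\mathcal C_c\subseteq\mathcal V^1\times\cdots\times\mathcal V^K$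 of admissible non-price attribute vectors; and a strict tie-breaking order over sellers. Customer $c$ lexicographically prefers item $i$ to item $j$ if there is an attribute $k$ with $v_i^{k'}\sim_c^{k'}v_j^{k'}$ for all $k'\succ_c k$ and $v_i^k\succ_c^k v_j^k$; if no such $k$ exists, the tie-breaking order decides. Under the Consider-then-Choose with Lexicographic Choice (CLC) model, customer $c$ forms the consideration set $\mathcal N_c=\{i\in\mathcal N: p_i\le w_c,\ (v_i^1,\dots,v_i^K)\in\mathcal C_c\}$, buys nothing if it is empty, and otherwise buys the top-ranked item of $\mathcal N_c$ under this lexicographic order (with tie-breaking). An instance of CLC choice is a joint distribution $\mathcal G$ of these customer primitives; the conditional distribution of $w_c$ given the other primitives is assumed to have a Lipschitz continuous density. $D_i(\mathbf p)$ is the probability a customer buys from seller $i$ and $R_i(\mathbf p)=p_iD_i(\mathbf p)$ is seller $i$'s revenue, also written $R_i(p_i,\mathbf p_{-i})$. *)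

theory Defs
  imports "HOL-Probability.Probability"
begin

text \<open>Sellers are the elements of a finite type 'n (so N = CARD('n)).
Attributes are indexed by naturals: 0 is price, 1..K are the non-price attributes.
All non-price attribute values live in one type 'v (the sets V^k are subsets of it).
vattr i k is the (fixed) value of non-price attribute k of seller i's item.\<close>

record ('n, 'v) customer =
  imp   :: "nat \<Rightarrow> nat \<Rightarrow> bool"          \<comment> \<open>imp c k k': attribute k is more important than k'\<close>
  apref :: "nat \<Rightarrow> 'v \<Rightarrow> 'v \<Rightarrow> bool"     \<comment> \<open>weak preference on values of non-price attribute k\<close>
  wtp   :: real
  adm   :: "(nat \<Rightarrow> 'v) set"             \<comment> \<open>admissible non-price attribute vectors (restricted to 1..K)\<close>
  tb    :: "'n \<Rightarrow> 'n \<Rightarrow> bool"           \<comment> \<open>strict tie-breaking order over sellers\<close>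

definition valid_customer :: "nat \<Rightarrow> real \<Rightarrow> ('n, 'v) customer \<Rightarrow> bool" where
  "valid_customer K vbar c \<longleftrightarrow>
     \<comment> \<open>strict total order on attributes {0..K}\<close>
     (\<forall>k. \<not> imp c k k) \<and>
     (\<forall>a b d. imp c a b \<longrightarrow> imp c b d \<longrightarrow> imp c a d) \<and>
     (\<forall>a\<in>{0..K}. \<forall>b\<in>{0..K}. a \<noteq> b \<longrightarrow> imp c a b \<or> imp c b a) \<and>
     (\<forall>a b. imp c a b \<longrightarrow> a \<in> {0..K} \<and> b \<in> {0..K}) \<and>
     \<comment> \<open>complete, transitive weak preferences on non-price attribute values\<close>
     (\<forall>k\<in>{1..K}. (\<forall>x y. apref c k x y \<or> apref c k y x) \<and>
                 (\<forall>x y z. apref c k x y \<longrightarrow> apref c k y z \<longrightarrow> apref c k x z)) \<and>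
     \<comment> \<open>willingness to pay\<close>
     wtp c \<in> {0..vbar} \<and>
     \<comment> \<open>strict total tie-breaking order over sellers\<close>
     (\<forall>i. \<not> tb c i i) \<and>
     (\<forall>i j l. tb c i j \<longrightarrow> tb c j l \<longrightarrow> tb c i l) \<and>
     (\<forall>i j. i \<noteq> j \<longrightarrow> tb c i j \<or> tb c j i)"

definition attr_wpref ::
  "('n, 'v) customer \<Rightarrow> ('n \<Rightarrow> nat \<Rightarrow> 'v) \<Rightarrow> ('n \<Rightarrow> real) \<Rightarrow> nat \<Rightarrow> 'n \<Rightarrow> 'n \<Rightarrow> bool" where
  "attr_wpref c vattr p k i j =
     (if k = 0 then p i \<le> p j else apref c k (vattr i k) (vattr j k))"

definition attr_spref where
  "attr_spref c vattr p k i j \<longleftrightarrow> attr_wpref c vattr p k i j \<and> \<not> attr_wpref c vattr p k j i"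

definition attr_indiff where
  "attr_indiff c vattr p k i j \<longleftrightarrow> attr_wpref c vattr p k i j \<and> attr_wpref c vattr p k j i"

definition lex_prefers ::
  "nat \<Rightarrow> ('n, 'v) customer \<Rightarrow> ('n \<Rightarrow> nat \<Rightarrow> 'v) \<Rightarrow> ('n \<Rightarrow> real) \<Rightarrow> 'n \<Rightarrow> 'n \<Rightarrow> bool" where
  "lex_prefers K c vattr p i j \<longleftrightarrow>
     (\<exists>k\<in>{0..K}. (\<forall>k'\<in>{0..K}. imp c k' k \<longrightarrow> attr_indiff c vattr p k' i j)
                 \<and> attr_spref c vattr p k i j)
     \<or> ((\<forall>k\<in>{0..K}. attr_indiff c vattr p k i j) \<and> tb c i j)"

definition consideration_set ::
  "nat \<Rightarrow> ('n, 'v) customer \<Rightarrow> ('n \<Rightarrow> nat \<Rightarrow> 'v) \<Rightarrow> ('n \<Rightarrow> real) \<Rightarrow> 'n set" where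
  "consideration_set K c vattr p =
     {i. p i \<le> wtp c \<and> restrict (vattr i) {1..K} \<in> adm c}"

definition buys ::
  "nat \<Rightarrow> ('n, 'v) customer \<Rightarrow> ('n \<Rightarrow> nat \<Rightarrow> 'v) \<Rightarrow> ('n \<Rightarrow> real) \<Rightarrow> 'n \<Rightarrow> bool" where
  "buys K c vattr p i \<longleftrightarrow>
     i \<in> consideration_set K c vattr p \<and>
     (\<forall>j\<in>consideration_set K c vattr p. j \<noteq> i \<longrightarrow> lex_prefers K c vattr p i j)"

text \<open>G is the distribution of customer primitives.\<close>
definition demand ::
  "('n, 'v) customer measure \<Rightarrow> nat \<Rightarrow> ('n \<Rightarrow> nat \<Rightarrow> 'v) \<Rightarrow> ('n \<Rightarrow> real) \<Rightarrow> 'n \<Rightarrow> real" where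
  "demand G K vattr p i = measure G {c \<in> space G. buys K c vattr p i}"

definition revenue ::
  "('n, 'v) customer measure \<Rightarrow> nat \<Rightarrow> ('n \<Rightarrow> nat \<Rightarrow> 'v) \<Rightarrow> ('n \<Rightarrow> real) \<Rightarrow> 'n \<Rightarrow> real" where
  "revenue G K vattr p i = p i * demand G K vattr p i"

end

theory Submission
  imports Defs
begin

lemma lex_cong:
  assumes "\<And>a b. a \<in> {i,j} \<Longrightarrow> b \<in> {i,j} \<Longrightarrow> (p a \<le> p b) = (p' a \<le> p' b)"
  shows "lex_prefers K c vattr p i j = lex_prefers K c vattr p' i j"
proof -
  have w: "\<And>k a b. a \<in> {i,j} \<Longrightarrow> b \<in> {i,j} \<Longrightarrow>
     attr_wpref c vattr p k a b = attr_wpref c vattr p' k a b"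
    using assms by (simp add: attr_wpref_def)
  have s: "\<And>k. attr_spref c vattr p k i j = attr_spref c vattr p' k i j"
    using w by (simp add: attr_spref_def)
  have d: "\<And>k. attr_indiff c vattr p k i j = attr_indiff c vattr p' k i j"
    using w by (simp add: attr_indiff_def)
  show ?thesis unfolding lex_prefers_def s d ..
qed

theorem theorem4p1:
  fixes G :: "('n::finite, 'v) customer measure"
    and K :: nat and vbar :: real
    and vattr :: "'n \<Rightarrow> nat \<Rightarrow> 'v"
    and p p' :: "'n \<Rightarrow> real" and i :: 'n
  assumes "prob_space G"
    and "vbar > 0"
    and "\<forall>c\<in>space G. valid_customer K vbar c"
    and "\<forall>j. p j \<in> {0..vbar}" and "\<forall>j. p' j \<in> {0..vbar}"
    and A6: "{j. p j \<ge> p i} = {j. p' j \<ge> p i}"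
    and A7: "\<forall>j\<in>{j. p j \<ge> p i}. p j = p' j"
  shows "revenue G K vattr p i = revenue G K vattr p' i"
proof -
  have pi: "p' i = p i" using A7 by (metis mem_Collect_eq order_refl)
  have ge: "\<And>j. (p j \<ge> p i) = (p' j \<ge> p i)" using A6 by blast
  have eqj: "\<And>j. p j \<ge> p i \<Longrightarrow> p' j = p j" using A7 by (metis mem_Collect_eq)
  have ord: "\<And>j a b. a \<in> {i,j} \<Longrightarrow> b \<in> {i,j} \<Longrightarrow> (p a \<le> p b) = (p' a \<le> p' b)"
  proof -
    fix j a b assume "a \<in> {i,j}" "b \<in> {i,j}"
    show "(p a \<le> p b) = (p' a \<le> p' b)"
    proof (cases "p j \<ge> p i")
      case True
      then have "p' j = p j" by (rule eqj)
      then show ?thesis using \<open>a \<in> {i,j}\<close> \<open>b \<in> {i,j}\<close> pi by auto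
    next
      case False
      then have "p' j < p i" using ge by force
      then show ?thesis using False \<open>a \<in> {i,j}\<close> \<open>b \<in> {i,j}\<close> pi by auto
    qed
  qed
  have lex: "\<And>c j. lex_prefers K c vattr p i j = lex_prefers K c vattr p' i j"
    by (rule lex_cong, rule ord)
  have cons: "\<And>(c::('n,'v) customer) j. p i \<le> wtp c \<Longrightarrow>
      (j \<in> consideration_set K c vattr p) = (j \<in> consideration_set K c vattr p')"
  proof -
    fix c :: "('n,'v) customer" and j assume w: "p i \<le> wtp c"
    show "(j \<in> consideration_set K c vattr p) = (j \<in> consideration_set K c vattr p')"
    proof (cases "p j \<ge> p i")
      case True then show ?thesis using eqj by (simp add: consideration_set_def)
    next
      case False
      then have "p' j < p i" using ge by force
      then show ?thesis using False w by (simp add: consideration_set_def)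
    qed
  qed
  have b: "\<And>c::('n,'v) customer. buys K c vattr p i = buys K c vattr p' i"
  proof -
    fix c :: "('n,'v) customer"
    show "buys K c vattr p i = buys K c vattr p' i"
    proof (cases "p i \<le> wtp c")
      case True
      then show ?thesis unfolding buys_def using cons[OF True] lex by auto
    next
      case False
      then show ?thesis using pi by (simp add: buys_def consideration_set_def)
    qed
  qed
  show ?thesis unfolding revenue_def demand_def using b pi by simp
qed

end
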